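(* Let $\tau\geq 1$ be a constant and let $u\neq v$ be points in the plane. Consider points $w$ with $\angle wuv\in[0,\pi/2)$, $\angle wvu\in[0,\pi/2)$ and $\tau|vw|<|uv|$, and the ratio $$\frac{|uw|}{|uv|-\tau|vw|}.$$ Then: (1) if $w$ is restricted to a compact segment of a circular arc centered at $u$, the ratio is maximized when $|vw|$ is largest; (2) if $w$ is restricted to a compact segment of a ray emanating from $v$, the ratio is maximized when $|vw|$ is largest; (3) if $w$ is restricted to a compact segment of a ray emanating from $u$, the maximum of the ratio is achieved at the position of $w$ making $|uw|$ largest or at the position making $|uw|$ smallest. *)

theory Defs
  imports "HOL-Analysis.Analysis"
begin

type_synonym point = "real^2"

text \<open>Angle at vertex b between the segments b--a and b--c (value in [0,pi]).
  Convention: if a = b or c = b the angle is pi/2 (as for vangle in the AFP).\<close>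
definition geom_angle :: "point \<Rightarrow> point \<Rightarrow> point \<Rightarrow> real" where
  "geom_angle a b c =
     (if a = b \<or> c = b then pi / 2
      else arccos (((a - b) \<bullet> (c - b)) / (norm (a - b) * norm (c - b))))"

definition arc_segment :: "point \<Rightarrow> real \<Rightarrow> real \<Rightarrow> real \<Rightarrow> point set" where
  "arc_segment c r a b = (\<lambda>\<theta>. c + r *\<^sub>R vector [cos \<theta>, sin \<theta>]) ` {a..b}"

definition ray_segment :: "point \<Rightarrow> point \<Rightarrow> real \<Rightarrow> real \<Rightarrow> point set" where
  "ray_segment p d s t = (\<lambda>x. p + x *\<^sub>R d) ` {s..t}"

definition admissible :: "real \<Rightarrow> point \<Rightarrow> point \<Rightarrow> point \<Rightarrow> bool" where
  "admissible \<tau> u v w \<longleftrightarrow>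
     0 \<le> geom_angle w u v \<and> geom_angle w u v < pi / 2 \<and>
     0 \<le> geom_angle w v u \<and> geom_angle w v u < pi / 2 \<and>
     \<tau> * dist v w < dist u v"

definition ratio :: "real \<Rightarrow> point \<Rightarrow> point \<Rightarrow> point \<Rightarrow> real" where
  "ratio \<tau> u v w = dist u w / (dist u v - \<tau> * dist v w)"

end

theory Submission
  imports Defs
begin

lemma norm_cs: "norm (vector [cos t, sin t] :: point) = 1"
proof -
  have "norm (vector [cos t, sin t] :: point) = sqrt (cos t * cos t + sin t * sin t)"
    by (simp add: norm_eq_sqrt_inner inner_vec_def sum_2)
  also have "\<dots> = 1" by (simp flip: power2_eq_square)
  finally show ?thesis .
qed

lemma vec_cs: "(vector [cos t, sin t] :: point) = cos t *\<^sub>R vector [1,0] + sin t *\<^sub>R vector [0,1]"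
  by (simp add: vec_eq_iff forall_2)

lemma adm_pos: "admissible \<tau> u v w \<Longrightarrow> dist u v - \<tau> * dist v w > 0"
  unfolding admissible_def by simp

lemma part1:
  fixes \<tau> :: real and u v :: point
  assumes "r > 0" "a \<le> b" "\<forall>w\<in>arc_segment u r a b. admissible \<tau> u v w" "\<tau> \<ge> 0"
  shows "(\<exists>w0\<in>arc_segment u r a b. \<forall>w\<in>arc_segment u r a b. dist v w \<le> dist v w0) \<and>
      (\<forall>w0\<in>arc_segment u r a b. (\<forall>w\<in>arc_segment u r a b. dist v w \<le> dist v w0) \<longrightarrow>
          (\<forall>w\<in>arc_segment u r a b. ratio \<tau> u v w \<le> ratio \<tau> u v w0))"
proof
  let ?f = "\<lambda>\<theta>. u + r *\<^sub>R (vector [cos \<theta>, sin \<theta>] :: point)"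
  have c: "continuous_on {a..b} (\<lambda>\<theta>. dist v (?f \<theta>))"
    unfolding vec_cs by (intro continuous_intros)
  obtain x where "x \<in> {a..b}" "\<forall>y\<in>{a..b}. dist v (?f y) \<le> dist v (?f x)"
    using continuous_attains_sup[OF compact_Icc _ c] assms(2) by auto
  then show "\<exists>w0\<in>arc_segment u r a b. \<forall>w\<in>arc_segment u r a b. dist v w \<le> dist v w0"
    unfolding arc_segment_def by auto
next
  have du: "dist u w = r" if "w \<in> arc_segment u r a b" for w
    using that assms(1) unfolding arc_segment_def by (auto simp: dist_norm norm_cs)
  show "\<forall>w0\<in>arc_segment u r a b. (\<forall>w\<in>arc_segment u r a b. dist v w \<le> dist v w0) \<longrightarrow>
          (\<forall>w\<in>arc_segment u r a b. ratio \<tau> u v w \<le> ratio \<tau> u v w0)"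
  proof (intro ballI impI)
    fix w0 w assume w0: "w0 \<in> arc_segment u r a b" and m: "\<forall>w\<in>arc_segment u r a b. dist v w \<le> dist v w0"
      and w: "w \<in> arc_segment u r a b"
    have p0: "dist u v - \<tau> * dist v w0 > 0" using adm_pos assms(3) w0 by blast
    have p: "dist u v - \<tau> * dist v w > 0" using adm_pos assms(3) w by blast
    have "\<tau> * dist v w \<le> \<tau> * dist v w0" using m w assms(4) by (simp add: mult_left_mono)
    then show "ratio \<tau> u v w \<le> ratio \<tau> u v w0"
      unfolding ratio_def du[OF w] du[OF w0] using p p0 assms(1)
      by (intro frac_le) auto
  qed
qed

lemma part2:
  fixes \<tau> :: real and u v d :: point
  assumes tau: "\<tau> \<ge> 1" and "d \<noteq> 0" "0 \<le> s" "s \<le> t" "\<forall>w\<in>ray_segment v d s t. admissible \<tau> u v w"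
  shows "(\<exists>w0\<in>ray_segment v d s t. \<forall>w\<in>ray_segment v d s t. dist v w \<le> dist v w0) \<and>
      (\<forall>w0\<in>ray_segment v d s t. (\<forall>w\<in>ray_segment v d s t. dist v w \<le> dist v w0) \<longrightarrow>
          (\<forall>w\<in>ray_segment v d s t. ratio \<tau> u v w \<le> ratio \<tau> u v w0))"
proof -
  have dv: "dist v (v + x *\<^sub>R d) = x * norm d" if "x \<ge> 0" for x
    using that by (simp add: dist_norm)
  have key: "ratio \<tau> u v (v + x *\<^sub>R d) \<le> ratio \<tau> u v (v + y *\<^sub>R d)"
    if "x \<in> {s..t}" "y \<in> {s..t}" "x \<le> y" for x y
  proof -
    define a where "a = dist u (v + x *\<^sub>R d)"
    define b where "b = dist u (v + y *\<^sub>R d)"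
    define L where "L = dist u v"
    define A where "A = L - \<tau> * (x * norm d)"
    define B where "B = L - \<tau> * (y * norm d)"
    define \<delta> where "\<delta> = (y - x) * norm d"
    have x0: "x \<ge> 0" "y \<ge> 0" using that assms by auto
    have A: "A > 0" using adm_pos assms(5) that(1) dv[OF x0(1)] unfolding A_def L_def ray_segment_def by force
    have B: "B > 0" using adm_pos assms(5) that(2) dv[OF x0(2)] unfolding B_def L_def ray_segment_def by force
    have d0: "\<delta> \<ge> 0" using that unfolding \<delta>_def by simp
    have BA: "B = A - \<tau> * \<delta>" unfolding A_def B_def \<delta>_def by (simp add: algebra_simps)
    have ab: "a - b \<le> \<delta>"
    proof -
      have "a \<le> b + dist (v + y *\<^sub>R d) (v + x *\<^sub>R d)" unfolding a_def b_def by (rule dist_triangle)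
      also have "dist (v + y *\<^sub>R d) (v + x *\<^sub>R d) = \<delta>"
        unfolding \<delta>_def dist_norm using that
        by (simp add: scaleR_diff_left[symmetric] )
      finally show ?thesis by simp
    qed
    have La: "L \<le> a + x * norm d"
    proof -
      have "L \<le> a + dist (v + x *\<^sub>R d) v" unfolding L_def a_def by (rule dist_triangle)
      thus ?thesis using x0 by (simp add: dist_norm)
    qed
    have a0: "a \<ge> 0" unfolding a_def by simp
    have "(a - b) * A \<le> \<delta> * A" using ab A by (simp add: mult_right_mono)
    moreover have "\<delta> * A \<le> \<tau> * \<delta> * a"
    proof -
      have "A \<le> \<tau> * a"
      proof -
        have "a + x * norm d \<le> \<tau> * (a + x * norm d)" using tau a0 x0
          by (metis mult_le_cancel_right1 mult.commute norm_ge_zero zero_le_mult_iff add_nonneg_nonneg not_le order_le_less_trans less_le_not_le)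
        thus ?thesis using La unfolding A_def by (simp add: algebra_simps)
      qed
      thus ?thesis using d0 by (metis mult.assoc mult.commute mult_left_mono)
    qed
    ultimately have "a * B \<le> b * A" unfolding BA by (simp add: algebra_simps)
    hence "a / A \<le> b / B" using A B by (simp add: divide_simps mult.commute)
    thus ?thesis unfolding ratio_def a_def[symmetric] b_def[symmetric] dv[OF x0(1)] dv[OF x0(2)]
      L_def[symmetric] A_def[symmetric] B_def[symmetric] .
  qed
  show ?thesis
  proof
    show "\<exists>w0\<in>ray_segment v d s t. \<forall>w\<in>ray_segment v d s t. dist v w \<le> dist v w0"
      unfolding ray_segment_def using assms(3,4) dv
      by (auto intro!: bexI[of _ t] mult_right_mono)
  next
    show "\<forall>w0\<in>ray_segment v d s t. (\<forall>w\<in>ray_segment v d s t. dist v w \<le> dist v w0) \<longrightarrow>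
          (\<forall>w\<in>ray_segment v d s t. ratio \<tau> u v w \<le> ratio \<tau> u v w0)"
    proof (intro ballI impI)
      fix w0 w assume w0: "w0 \<in> ray_segment v d s t" and m: "\<forall>w\<in>ray_segment v d s t. dist v w \<le> dist v w0"
        and w: "w \<in> ray_segment v d s t"
      obtain x where x: "x \<in> {s..t}" "w = v + x *\<^sub>R d" using w unfolding ray_segment_def by auto
      obtain y where y: "y \<in> {s..t}" "w0 = v + y *\<^sub>R d" using w0 unfolding ray_segment_def by auto
      have "x * norm d \<le> y * norm d"
        using m w x y dv assms(3) by (metis atLeastAtMost_iff order_trans)
      hence "x \<le> y" using assms(2) by simp
      thus "ratio \<tau> u v w \<le> ratio \<tau> u v w0" using key x y by simp
    qed
  qed
qed

lemma part3:
  fixes \<tau> :: real and u v d :: point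
  assumes tau: "\<tau> \<ge> 0" and "d \<noteq> 0" "0 \<le> s" "s \<le> t" "\<forall>w\<in>ray_segment u d s t. admissible \<tau> u v w"
  shows "\<exists>w0\<in>ray_segment u d s t.
          ((\<forall>w\<in>ray_segment u d s t. dist u w \<le> dist u w0) \<or>
           (\<forall>w\<in>ray_segment u d s t. dist u w0 \<le> dist u w)) \<and>
          (\<forall>w\<in>ray_segment u d s t. ratio \<tau> u v w \<le> ratio \<tau> u v w0)"
proof -
  define P where "P x = u + x *\<^sub>R d" for x
  define L where "L = dist u v"
  define H where "H x = L - \<tau> * norm (v - P x)" for x
  have du: "dist u (P x) = x * norm d" if "x \<ge> 0" for x
    using that by (simp add: dist_norm P_def)
  have rat: "ratio \<tau> u v (P x) = x * norm d / H x" if "x \<ge> 0" for x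
    unfolding ratio_def du[OF that] H_def L_def by (simp add: dist_norm norm_minus_commute)
  have Hp: "H x > 0" if "x \<in> {s..t}" for x
    using adm_pos[of \<tau> u v "P x"] assms(5) that unfolding ray_segment_def H_def L_def P_def
    by (force simp: dist_norm)
  define R where "R = max (ratio \<tau> u v (P s)) (ratio \<tau> u v (P t))"
  have st: "s \<in> {s..t}" "t \<in> {s..t}" using assms by auto
  have Rs: "s * norm d \<le> R * H s"
  proof -
    have "s * norm d / H s \<le> R" unfolding R_def using rat[of s] assms by simp
    thus ?thesis using Hp[OF st(1)] by (simp add: divide_simps)
  qed
  have Rt: "t * norm d \<le> R * H t"
  proof -
    have "t * norm d / H t \<le> R" unfolding R_def using rat[of t] assms by simp
    thus ?thesis using Hp[OF st(2)] by (simp add: divide_simps)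
  qed
  have R0: "R \<ge> 0"
  proof -
    have "0 \<le> s * norm d / H s" using assms Hp[OF st(1)] by simp
    thus ?thesis using rat[of s] assms unfolding R_def by linarith
  qed
  have key: "ratio \<tau> u v (P x) \<le> R" if x: "x \<in> {s..t}" for x
  proof -
    obtain \<mu> where mu: "0 \<le> \<mu>" "\<mu> \<le> 1" "x = \<mu> * s + (1 - \<mu>) * t"
    proof (cases "s = t")
      case True thus ?thesis using that[of 1] x by auto
    next
      case False
      show ?thesis
      proof (rule that[of "(t - x) / (t - s)"])
        have ts: "t - s > 0" using False assms by simp
        show "0 \<le> (t - x) / (t - s)" using x ts by simp
        show "(t - x) / (t - s) \<le> 1" using x ts by (simp add: divide_simps)
        have q: "(t - x) / (t - s) * (t - s) = t - x" using ts by simp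
        have g: "q * s + (1 - q) * t = t - q * (t - s)" for q :: real
          by (simp add: algebra_simps)
        show "x = (t - x) / (t - s) * s + (1 - (t - x) / (t - s)) * t" unfolding g q by simp
      qed
    qed
    have eqv: "v - P x = \<mu> *\<^sub>R (v - P s) + (1 - \<mu>) *\<^sub>R (v - P t)"
      unfolding P_def mu(3) by (simp add: algebra_simps)
    have "norm (v - P x) \<le> norm (\<mu> *\<^sub>R (v - P s)) + norm ((1 - \<mu>) *\<^sub>R (v - P t))"
      unfolding eqv by (rule norm_triangle_ineq)
    hence nx: "norm (v - P x) \<le> \<mu> * norm (v - P s) + (1 - \<mu>) * norm (v - P t)"
      using mu by simp
    have "\<tau> * norm (v - P x) \<le> \<tau> * (\<mu> * norm (v - P s) + (1 - \<mu>) * norm (v - P t))"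
      using nx tau by (rule mult_left_mono)
    hence Hx: "\<mu> * H s + (1 - \<mu>) * H t \<le> H x" unfolding H_def
      by (simp add: algebra_simps)
    have "x * norm d = \<mu> * (s * norm d) + (1 - \<mu>) * (t * norm d)" unfolding mu(3) by (simp add: algebra_simps)
    also have "\<dots> \<le> \<mu> * (R * H s) + (1 - \<mu>) * (R * H t)"
      using Rs Rt mu by (intro add_mono mult_left_mono) auto
    also have "\<dots> = R * (\<mu> * H s + (1 - \<mu>) * H t)" by (simp add: algebra_simps)
    also have "\<dots> \<le> R * H x" using Hx R0 by (simp add: mult_left_mono)
    finally have "x * norm d \<le> R * H x" .
    hence "x * norm d / H x \<le> R" using Hp[OF x] by (simp add: pos_divide_le_eq)
    thus ?thesis using rat[of x] x assms by simp
  qed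
  have keyw: "\<forall>w\<in>ray_segment u d s t. ratio \<tau> u v w \<le> R"
    unfolding ray_segment_def using key unfolding P_def by auto
  have dmono: "dist u (P x) \<le> dist u (P y)" if "x \<in> {s..t}" "y \<in> {s..t}" "x \<le> y" for x y
    using that assms du by (auto intro: mult_right_mono)
  show ?thesis
  proof (cases "ratio \<tau> u v (P s) \<le> ratio \<tau> u v (P t)")
    case True
    show ?thesis
      apply (rule bexI[of _ "P t"])
      using keyw True dmono st unfolding R_def ray_segment_def P_def[symmetric]
      by auto
  next
    case False
    show ?thesis
      apply (rule bexI[of _ "P s"])
      using keyw False dmono st unfolding R_def ray_segment_def P_def[symmetric]
      by auto
  qed
qed

theorem lemma3:
  fixes \<tau> :: real and u v :: point
  assumes tau: "\<tau> \<ge> 1" and uv: "u \<noteq> v"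
  shows
   "(\<forall>r a b. r > 0 \<and> a \<le> b \<and> (\<forall>w\<in>arc_segment u r a b. admissible \<tau> u v w) \<longrightarrow>
      (\<exists>w0\<in>arc_segment u r a b. \<forall>w\<in>arc_segment u r a b. dist v w \<le> dist v w0) \<and>
      (\<forall>w0\<in>arc_segment u r a b. (\<forall>w\<in>arc_segment u r a b. dist v w \<le> dist v w0) \<longrightarrow>
          (\<forall>w\<in>arc_segment u r a b. ratio \<tau> u v w \<le> ratio \<tau> u v w0)))
    \<and>
    (\<forall>d s t. d \<noteq> 0 \<and> 0 \<le> s \<and> s \<le> t \<and> (\<forall>w\<in>ray_segment v d s t. admissible \<tau> u v w) \<longrightarrow>
      (\<exists>w0\<in>ray_segment v d s t. \<forall>w\<in>ray_segment v d s t. dist v w \<le> dist v w0) \<and>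
      (\<forall>w0\<in>ray_segment v d s t. (\<forall>w\<in>ray_segment v d s t. dist v w \<le> dist v w0) \<longrightarrow>
          (\<forall>w\<in>ray_segment v d s t. ratio \<tau> u v w \<le> ratio \<tau> u v w0)))
    \<and>
    (\<forall>d s t. d \<noteq> 0 \<and> 0 \<le> s \<and> s \<le> t \<and> (\<forall>w\<in>ray_segment u d s t. admissible \<tau> u v w) \<longrightarrow>
      (\<exists>w0\<in>ray_segment u d s t.
          ((\<forall>w\<in>ray_segment u d s t. dist u w \<le> dist u w0) \<or>
           (\<forall>w\<in>ray_segment u d s t. dist u w0 \<le> dist u w)) \<and>
          (\<forall>w\<in>ray_segment u d s t. ratio \<tau> u v w \<le> ratio \<tau> u v w0)))"
proof -
  have t0: "\<tau> \<ge> 0" using tau by simp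
  show ?thesis
  proof (intro conjI allI impI)
    fix r a b assume h: "0 < r \<and> a \<le> b \<and> (\<forall>w\<in>arc_segment u r a b. admissible \<tau> u v w)"
    show "(\<exists>w0\<in>arc_segment u r a b. \<forall>w\<in>arc_segment u r a b. dist v w \<le> dist v w0)"
      using part1[where r=r and a=a and b=b and \<tau>=\<tau> and u=u and v=v] h t0 by blast
    show "\<forall>w0\<in>arc_segment u r a b. (\<forall>w\<in>arc_segment u r a b. dist v w \<le> dist v w0) \<longrightarrow>
          (\<forall>w\<in>arc_segment u r a b. ratio \<tau> u v w \<le> ratio \<tau> u v w0)"
      using part1[where r=r and a=a and b=b and \<tau>=\<tau> and u=u and v=v] h t0 by blast
  next
    fix d :: point and s t
    assume h: "d \<noteq> 0 \<and> 0 \<le> s \<and> s \<le> t \<and> (\<forall>w\<in>ray_segment v d s t. admissible \<tau> u v w)"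
    show "\<exists>w0\<in>ray_segment v d s t. \<forall>w\<in>ray_segment v d s t. dist v w \<le> dist v w0"
      using part2[OF tau, where d=d and s=s and t=t and u=u and v=v] h by blast
    show "\<forall>w0\<in>ray_segment v d s t. (\<forall>w\<in>ray_segment v d s t. dist v w \<le> dist v w0) \<longrightarrow>
          (\<forall>w\<in>ray_segment v d s t. ratio \<tau> u v w \<le> ratio \<tau> u v w0)"
      using part2[OF tau, where d=d and s=s and t=t and u=u and v=v] h by blast
  next
    fix d :: point and s t
    assume h: "d \<noteq> 0 \<and> 0 \<le> s \<and> s \<le> t \<and> (\<forall>w\<in>ray_segment u d s t. admissible \<tau> u v w)"
    show "\<exists>w0\<in>ray_segment u d s t.
          ((\<forall>w\<in>ray_segment u d s t. dist u w \<le> dist u w0) \<or>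
           (\<forall>w\<in>ray_segment u d s t. dist u w0 \<le> dist u w)) \<and>
          (\<forall>w\<in>ray_segment u d s t. ratio \<tau> u v w \<le> ratio \<tau> u v w0)"
      using part3[OF t0, where d=d and s=s and t=t and u=u and v=v] h by blast
  qed
qed

end
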